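(* Let $U$ be a unitary acting on $n$ qubits. Then $U$ is a Pauli-Square-Root Clifford (PSC) if and only if the controlled unitary $C(U)=|0\rangle\langle 0|\otimes I+|1\rangle\langle 1|\otimes U$ (acting on $n+1$ qubits) belongs to the third level $\mathcal{C}^{(3)}$ of the Clifford hierarchy.
   Context: The $n$-qubit Pauli group $\mathcal{P}_n$ consists of all $n$-fold tensor products of single-qubit Pauli matrices $I,X,Y,Z$ multiplied by a phase in $\{\pm 1,\pm i\}$. The Clifford hierarchy is defined by $\mathcal{C}^{(1)}=\mathcal{P}_n$ and, for $k\ge 2$, $\mathcal{C}^{(k)}=\{V\in U(2^n): VPV^{\dagger}\in\mathcal{C}^{(k-1)}\ \forall P\in\mathcal{P}_n\}$; $\mathcal{C}^{(2)}$ is the Clifford group. A unitary is a Pauli-Square-Root Clifford (PSC) if it is a Clifford that is not a Pauli and whose square is a Pauli. *)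

theory Defs
  imports "Jordan_Normal_Form.Schur_Decomposition"
begin

definition kron :: "complex mat \<Rightarrow> complex mat \<Rightarrow> complex mat" where
  "kron A B = mat (dim_row A * dim_row B) (dim_col A * dim_col B)
     (\<lambda>(i,j). A $$ (i div dim_row B, j div dim_col B) * B $$ (i mod dim_row B, j mod dim_col B))"

definition pauli_I :: "complex mat" where "pauli_I = mat_of_rows_list 2 [[1,0],[0,1]]"
definition pauli_X :: "complex mat" where "pauli_X = mat_of_rows_list 2 [[0,1],[1,0]]"
definition pauli_Y :: "complex mat" where "pauli_Y = mat_of_rows_list 2 [[0,-\<i>],[\<i>,0]]"
definition pauli_Z :: "complex mat" where "pauli_Z = mat_of_rows_list 2 [[1,0],[0,-1]]"

definition single_paulis :: "complex mat set" where
  "single_paulis = {pauli_I, pauli_X, pauli_Y, pauli_Z}"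

text \<open>n-fold tensor product of a list of single-qubit matrices (first list entry = first qubit).\<close>
fun tensor_list :: "complex mat list \<Rightarrow> complex mat" where
  "tensor_list [] = 1\<^sub>m 1"
| "tensor_list (A # As) = kron A (tensor_list As)"

definition pauli_group :: "nat \<Rightarrow> complex mat set" where
  "pauli_group n = {c \<cdot>\<^sub>m tensor_list ps | c ps.
      c \<in> {1, -1, \<i>, -\<i>} \<and> length ps = n \<and> set ps \<subseteq> single_paulis}"

definition unitary_n :: "nat \<Rightarrow> complex mat \<Rightarrow> bool" where
  "unitary_n n U \<longleftrightarrow> U \<in> carrier_mat (2^n) (2^n) \<and> U * mat_adjoint U = 1\<^sub>m (2^n)"

text \<open>Clifford hierarchy: clifford_hier n k = C^(k) on n qubits, for k \<ge> 1 (level 0 is unused).\<close>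
fun clifford_hier :: "nat \<Rightarrow> nat \<Rightarrow> complex mat set" where
  "clifford_hier n 0 = {}"
| "clifford_hier n (Suc 0) = pauli_group n"
| "clifford_hier n (Suc (Suc k)) =
     {V. unitary_n n V \<and> (\<forall>P \<in> pauli_group n. V * P * mat_adjoint V \<in> clifford_hier n (Suc k))}"

definition PSC :: "nat \<Rightarrow> complex mat \<Rightarrow> bool" where
  "PSC n U \<longleftrightarrow> U \<in> clifford_hier n 2 \<and> U \<notin> pauli_group n \<and> U * U \<in> pauli_group n"

definition ket0bra0 :: "complex mat" where "ket0bra0 = mat_of_rows_list 2 [[1,0],[0,0]]"
definition ket1bra1 :: "complex mat" where "ket1bra1 = mat_of_rows_list 2 [[0,0],[0,1]]"

definition controlled :: "nat \<Rightarrow> complex mat \<Rightarrow> complex mat" where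
  "controlled n U = kron ket0bra0 (1\<^sub>m (2^n)) + kron ket1bra1 U"

end

theory Submission
  imports Defs
begin

lemma adj_dims[simp]: fixes A :: "complex mat" shows "dim_row (mat_adjoint A) = dim_col A" "dim_col (mat_adjoint A) = dim_row A"
  unfolding mat_adjoint_def by (simp_all add: mat_of_rows_def)

lemma adj_index[simp]: fixes A :: "complex mat" shows "i < dim_col A \<Longrightarrow> j < dim_row A \<Longrightarrow> mat_adjoint A $$ (i,j) = cnj (A $$ (j,i))"
  unfolding mat_adjoint_def by (simp add: mat_of_rows_index)

lemma adj_carrier[simp]: fixes A :: "complex mat" shows "A \<in> carrier_mat r c \<Longrightarrow> mat_adjoint A \<in> carrier_mat c r"
  unfolding carrier_mat_def by simp

lemma adj_adj[simp]: fixes A :: "complex mat" shows "mat_adjoint (mat_adjoint A) = A"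
  by (rule eq_matI) simp_all

lemma adj_smult[simp]: fixes A :: "complex mat" shows "mat_adjoint (k \<cdot>\<^sub>m A) = cnj k \<cdot>\<^sub>m mat_adjoint A"
  by (rule eq_matI) simp_all

lemma adj_one[simp]: "mat_adjoint (1\<^sub>m n :: complex mat) = 1\<^sub>m n"
  by (rule eq_matI) simp_all

lemma adj_zero[simp]: "mat_adjoint (0\<^sub>m r c :: complex mat) = 0\<^sub>m c r"
  by (rule eq_matI) simp_all
lemma adj_mult: fixes A :: "complex mat" assumes "A \<in> carrier_mat r m" "B \<in> carrier_mat m c"
  shows "mat_adjoint (A * B) = mat_adjoint B * mat_adjoint A"
proof (rule eq_matI)
  fix i j assume ij: "i < dim_row (mat_adjoint B * mat_adjoint A)" "j < dim_col (mat_adjoint B * mat_adjoint A)"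
  hence ij': "i < c" "j < r" using assms by auto
  have "mat_adjoint (A * B) $$ (i,j) = cnj ((A*B) $$ (j,i))" using ij' assms by simp
  also have "\<dots> = (\<Sum>k = 0..<m. cnj (A $$ (j,k)) * cnj (B $$ (k,i)))"
    using ij' assms by (simp add: scalar_prod_def cnj_sum)
  also have "\<dots> = (mat_adjoint B * mat_adjoint A) $$ (i,j)"
    using ij' assms by (simp add: scalar_prod_def mult.commute)
  finally show "mat_adjoint (A * B) $$ (i,j) = (mat_adjoint B * mat_adjoint A) $$ (i,j)" .
qed (insert assms, simp_all)

lemma adj_four: fixes A :: "complex mat" assumes "A \<in> carrier_mat N N" "B \<in> carrier_mat N N" "C \<in> carrier_mat N N" "D \<in> carrier_mat N N"
  shows "mat_adjoint (four_block_mat A B C D) = four_block_mat (mat_adjoint A) (mat_adjoint C) (mat_adjoint B) (mat_adjoint D)"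
  by (rule eq_matI, insert assms, auto)

section \<open>Blocks\<close>

definition dg :: "complex mat \<Rightarrow> complex mat \<Rightarrow> complex mat" where
  "dg A B = four_block_mat A (0\<^sub>m (dim_row A) (dim_col B)) (0\<^sub>m (dim_row B) (dim_col A)) B"
definition od :: "complex mat \<Rightarrow> complex mat \<Rightarrow> complex mat" where
  "od A B = four_block_mat (0\<^sub>m (dim_row A) (dim_col B)) A B (0\<^sub>m (dim_row B) (dim_col A))"

context fixes N :: nat begin

lemma dg_carrier[simp]: "A \<in> carrier_mat N N \<Longrightarrow> B \<in> carrier_mat N N \<Longrightarrow> dg A B \<in> carrier_mat (N+N) (N+N)"
  unfolding dg_def by auto
lemma od_carrier[simp]: "A \<in> carrier_mat N N \<Longrightarrow> B \<in> carrier_mat N N \<Longrightarrow> od A B \<in> carrier_mat (N+N) (N+N)"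
  unfolding od_def by auto

lemma dg_mult_dg: assumes "A \<in> carrier_mat N N" "B \<in> carrier_mat N N" "C \<in> carrier_mat N N" "D \<in> carrier_mat N N"
  shows "dg A B * dg C D = dg (A * C) (B * D)"
  unfolding dg_def using assms
  by (subst mult_four_block_mat[of _ N N _ N _ N _ _ N _ N], auto)
lemma dg_mult_od: assumes "A \<in> carrier_mat N N" "B \<in> carrier_mat N N" "C \<in> carrier_mat N N" "D \<in> carrier_mat N N"
  shows "dg A B * od C D = od (A * C) (B * D)"
  unfolding dg_def od_def using assms
  by (subst mult_four_block_mat[of _ N N _ N _ N _ _ N _ N], auto)
lemma od_mult_dg: assumes "A \<in> carrier_mat N N" "B \<in> carrier_mat N N" "C \<in> carrier_mat N N" "D \<in> carrier_mat N N"
  shows "od A B * dg C D = od (A * D) (B * C)"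
  unfolding dg_def od_def using assms
  by (subst mult_four_block_mat[of _ N N _ N _ N _ _ N _ N], auto)
lemma od_mult_od: assumes "A \<in> carrier_mat N N" "B \<in> carrier_mat N N" "C \<in> carrier_mat N N" "D \<in> carrier_mat N N"
  shows "od A B * od C D = dg (A * D) (B * C)"
  unfolding dg_def od_def using assms
  by (subst mult_four_block_mat[of _ N N _ N _ N _ _ N _ N], auto)

lemma adj_dg: assumes "A \<in> carrier_mat N N" "B \<in> carrier_mat N N"
  shows "mat_adjoint (dg A B) = dg (mat_adjoint A) (mat_adjoint B)"
  unfolding dg_def using assms by (subst adj_four[of _ N], auto)
lemma adj_od: assumes "A \<in> carrier_mat N N" "B \<in> carrier_mat N N"
  shows "mat_adjoint (od A B) = od (mat_adjoint B) (mat_adjoint A)"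
  unfolding od_def using assms by (subst adj_four[of _ N], auto)

lemma dg_one: "dg (1\<^sub>m N) (1\<^sub>m N) = 1\<^sub>m (N+N)"
  unfolding dg_def by simp

lemma dg_eq: assumes "A \<in> carrier_mat N N" "B \<in> carrier_mat N N" "C \<in> carrier_mat N N" "D \<in> carrier_mat N N"
  and "dg A B = dg C D" shows "A = C \<and> B = D"
proof -
  have "\<And>i j. i < N \<Longrightarrow> j < N \<Longrightarrow> A $$ (i,j) = C $$ (i,j) \<and> B $$ (i,j) = D $$ (i,j)"
  proof -
    fix i j assume ij: "i < N" "j < N"
    have "dg A B $$ (i,j) = dg C D $$ (i,j)" "dg A B $$ (i+N,j+N) = dg C D $$ (i+N,j+N)"
      using assms by auto
    thus "A $$ (i,j) = C $$ (i,j) \<and> B $$ (i,j) = D $$ (i,j)" using assms ij unfolding dg_def by auto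
  qed
  thus ?thesis using assms by (auto intro!: eq_matI)
qed

lemma od_eq: assumes "A \<in> carrier_mat N N" "B \<in> carrier_mat N N" "C \<in> carrier_mat N N" "D \<in> carrier_mat N N"
  and "od A B = od C D" shows "A = C \<and> B = D"
proof -
  have "\<And>i j. i < N \<Longrightarrow> j < N \<Longrightarrow> A $$ (i,j) = C $$ (i,j) \<and> B $$ (i,j) = D $$ (i,j)"
  proof -
    fix i j assume ij: "i < N" "j < N"
    have "od A B $$ (i,j+N) = od C D $$ (i,j+N)" "od A B $$ (i+N,j) = od C D $$ (i+N,j)"
      using assms by auto
    thus "A $$ (i,j) = C $$ (i,j) \<and> B $$ (i,j) = D $$ (i,j)" using assms ij unfolding od_def by auto
  qed
  thus ?thesis using assms by (auto intro!: eq_matI)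
qed

lemma od_eq_dg: assumes "A \<in> carrier_mat N N" "B \<in> carrier_mat N N" "C \<in> carrier_mat N N" "D \<in> carrier_mat N N"
  and "od A B = dg C D" shows "C = 0\<^sub>m N N"
proof -
  have "\<And>i j. i < N \<Longrightarrow> j < N \<Longrightarrow> C $$ (i,j) = 0"
  proof -
    fix i j assume ij: "i < N" "j < N"
    have "od A B $$ (i,j) = dg C D $$ (i,j)" 
      using assms by auto
    thus "C $$ (i,j) = 0" using assms ij unfolding dg_def od_def by auto
  qed
  thus ?thesis using assms by (auto intro!: eq_matI)
qed

end

lemma smult_smult_mat[simp]: "(a::complex) \<cdot>\<^sub>m (b \<cdot>\<^sub>m A) = (a * b) \<cdot>\<^sub>m A"
  by (rule eq_matI) simp_all
lemma smult_one_mat[simp]: "(1::complex) \<cdot>\<^sub>m A = A"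
  by (rule eq_matI) simp_all
lemma smult_zero_left_mat[simp]: "(0::complex) \<cdot>\<^sub>m A = 0\<^sub>m (dim_row A) (dim_col A)"
  by (rule eq_matI) simp_all

lemma dg_smult: "A \<in> carrier_mat N N \<Longrightarrow> B \<in> carrier_mat N N \<Longrightarrow> c \<cdot>\<^sub>m dg A B = dg (c \<cdot>\<^sub>m A) (c \<cdot>\<^sub>m B)"
  unfolding dg_def by (subst smult_four_block_mat[of _ N N _ N _ N], auto)
lemma od_smult: "A \<in> carrier_mat N N \<Longrightarrow> B \<in> carrier_mat N N \<Longrightarrow> c \<cdot>\<^sub>m od A B = od (c \<cdot>\<^sub>m A) (c \<cdot>\<^sub>m B)"
  unfolding od_def by (subst smult_four_block_mat[of _ N N _ N _ N], auto)

section \<open>Kronecker with a 2x2 matrix\<close>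

lemma kron_carrier[simp]: "kron A B \<in> carrier_mat (dim_row A * dim_row B) (dim_col A * dim_col B)"
  unfolding kron_def by (rule carrier_matI) simp_all
lemma kron_blocks: assumes A: "A \<in> carrier_mat 2 2" and P: "P \<in> carrier_mat N N"
  shows "kron A P = four_block_mat (A $$ (0,0) \<cdot>\<^sub>m P) (A $$ (0,1) \<cdot>\<^sub>m P) (A $$ (1,0) \<cdot>\<^sub>m P) (A $$ (1,1) \<cdot>\<^sub>m P)"
proof (rule eq_matI)
  fix i j assume "i < dim_row (four_block_mat (A $$ (0,0) \<cdot>\<^sub>m P) (A $$ (0,1) \<cdot>\<^sub>m P) (A $$ (1,0) \<cdot>\<^sub>m P) (A $$ (1,1) \<cdot>\<^sub>m P))"
    "j < dim_col (four_block_mat (A $$ (0,0) \<cdot>\<^sub>m P) (A $$ (0,1) \<cdot>\<^sub>m P) (A $$ (1,0) \<cdot>\<^sub>m P) (A $$ (1,1) \<cdot>\<^sub>m P))"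
  hence ij: "i < N + N" "j < N + N" using P by auto
  have di: "(i < N \<and> i div N = 0 \<and> i mod N = i) \<or> (\<not> i < N \<and> i div N = 1 \<and> i mod N = i - N)"
    using ij by (cases "i < N") (auto simp: div_if mod_if)
  have dj: "(j < N \<and> j div N = 0 \<and> j mod N = j) \<or> (\<not> j < N \<and> j div N = 1 \<and> j mod N = j - N)"
    using ij by (cases "j < N") (auto simp: div_if mod_if)
  show "kron A P $$ (i, j) = four_block_mat (A $$ (0,0) \<cdot>\<^sub>m P) (A $$ (0,1) \<cdot>\<^sub>m P) (A $$ (1,0) \<cdot>\<^sub>m P) (A $$ (1,1) \<cdot>\<^sub>m P) $$ (i,j)"
    using A P ij di dj unfolding kron_def by auto
qed (insert A P, auto simp: kron_def)

lemma carrier_I[simp]: "pauli_I \<in> carrier_mat 2 2" and carrier_X[simp]: "pauli_X \<in> carrier_mat 2 2"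
  and carrier_Y[simp]: "pauli_Y \<in> carrier_mat 2 2" and carrier_Z[simp]: "pauli_Z \<in> carrier_mat 2 2"
  unfolding pauli_I_def pauli_X_def pauli_Y_def pauli_Z_def by (simp_all add: mat_of_rows_list_def carrier_matI)
lemma entries_paulis: 
  "pauli_I $$ (0,0) = 1" "pauli_I $$ (0,1) = 0" "pauli_I $$ (1,0) = 0" "pauli_I $$ (1,1) = 1"
  "pauli_X $$ (0,0) = 0" "pauli_X $$ (0,1) = 1" "pauli_X $$ (1,0) = 1" "pauli_X $$ (1,1) = 0"
  "pauli_Y $$ (0,0) = 0" "pauli_Y $$ (0,1) = -\<i>" "pauli_Y $$ (1,0) = \<i>" "pauli_Y $$ (1,1) = 0"
  "pauli_Z $$ (0,0) = 1" "pauli_Z $$ (0,1) = 0" "pauli_Z $$ (1,0) = 0" "pauli_Z $$ (1,1) = -1"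
  unfolding pauli_I_def pauli_X_def pauli_Y_def pauli_Z_def by (simp_all add: mat_of_rows_list_def)

lemma entries_paulis2: 
  "pauli_I $$ (0,0) = 1" "pauli_I $$ (0,Suc 0) = 0" "pauli_I $$ (Suc 0,0) = 0" "pauli_I $$ (Suc 0,Suc 0) = 1"
  "pauli_X $$ (0,0) = 0" "pauli_X $$ (0,Suc 0) = 1" "pauli_X $$ (Suc 0,0) = 1" "pauli_X $$ (Suc 0,Suc 0) = 0"
  "pauli_Y $$ (0,0) = 0" "pauli_Y $$ (0,Suc 0) = -\<i>" "pauli_Y $$ (Suc 0,0) = \<i>" "pauli_Y $$ (Suc 0,Suc 0) = 0"
  "pauli_Z $$ (0,0) = 1" "pauli_Z $$ (0,Suc 0) = 0" "pauli_Z $$ (Suc 0,0) = 0" "pauli_Z $$ (Suc 0,Suc 0) = -1"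
  unfolding pauli_I_def pauli_X_def pauli_Y_def pauli_Z_def by (simp_all add: mat_of_rows_list_def)

lemma kron_I: "P \<in> carrier_mat N N \<Longrightarrow> kron pauli_I P = dg P P"
  by (simp add: kron_blocks[where N=N] entries_paulis entries_paulis2 dg_def carrier_matD)
lemma kron_Z: "P \<in> carrier_mat N N \<Longrightarrow> kron pauli_Z P = dg P ((-1) \<cdot>\<^sub>m P)"
  by (simp add: kron_blocks[where N=N] entries_paulis entries_paulis2 dg_def carrier_matD)
lemma kron_X: "P \<in> carrier_mat N N \<Longrightarrow> kron pauli_X P = od P P"
  by (simp add: kron_blocks[where N=N] entries_paulis entries_paulis2 od_def carrier_matD)
lemma kron_Y: "P \<in> carrier_mat N N \<Longrightarrow> kron pauli_Y P = od ((-\<i>) \<cdot>\<^sub>m P) (\<i> \<cdot>\<^sub>m P)"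
  by (simp add: kron_blocks[where N=N] entries_paulis entries_paulis2 od_def carrier_matD)

lemma tensor_list_carrier: "set ps \<subseteq> single_paulis \<Longrightarrow> tensor_list ps \<in> carrier_mat (2 ^ length ps) (2 ^ length ps)"
proof (induction ps)
  case Nil thus ?case by simp
next
  case (Cons A ps)
  hence "A \<in> carrier_mat 2 2" unfolding single_paulis_def by auto
  thus ?case using Cons kron_carrier[of A "tensor_list ps"] by (simp add: carrier_matD)
qed

definition ph :: "complex set" where "ph = {1, -1, \<i>, -\<i>}"
definition sg :: "complex set" where "sg = {1, -1}"

lemma ph_mult: "a \<in> ph \<Longrightarrow> b \<in> ph \<Longrightarrow> a * b \<in> ph"
  unfolding ph_def by auto
lemma sg_ph: "s \<in> sg \<Longrightarrow> s \<in> ph" unfolding sg_def ph_def by auto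
lemma sg_sq: "s \<in> sg \<Longrightarrow> s * s = 1" unfolding sg_def by auto
lemma sg_mult: "s \<in> sg \<Longrightarrow> t \<in> sg \<Longrightarrow> s * t \<in> sg" unfolding sg_def by auto
lemma sg_cnj: "s \<in> sg \<Longrightarrow> cnj s = s" unfolding sg_def by auto
lemma ph_cnj: "a \<in> ph \<Longrightarrow> cnj a \<in> ph" unfolding ph_def by auto
lemma ph_cnj_mult: "a \<in> ph \<Longrightarrow> a * cnj a = 1" unfolding ph_def by auto
lemma ph_sq: "a \<in> ph \<Longrightarrow> a * a \<in> sg" unfolding ph_def sg_def by auto

lemma pg_I: "c \<in> ph \<Longrightarrow> length ps = n \<Longrightarrow> set ps \<subseteq> single_paulis \<Longrightarrow> c \<cdot>\<^sub>m tensor_list ps \<in> pauli_group n"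
  unfolding pauli_group_def ph_def by blast

lemma pg_E: assumes "P \<in> pauli_group n"
  obtains c ps where "c \<in> ph" "length ps = n" "set ps \<subseteq> single_paulis" "P = c \<cdot>\<^sub>m tensor_list ps"
  using assms unfolding pauli_group_def ph_def by blast

lemma pg_carrier: "P \<in> pauli_group n \<Longrightarrow> P \<in> carrier_mat (2^n) (2^n)"
  by (elim pg_E, insert tensor_list_carrier, auto)

lemma pg_smult: "P \<in> pauli_group n \<Longrightarrow> a \<in> ph \<Longrightarrow> a \<cdot>\<^sub>m P \<in> pauli_group n"
  by (elim pg_E, auto intro!: pg_I ph_mult)

lemma pg0: "P \<in> pauli_group 0 \<longleftrightarrow> (\<exists>c\<in>ph. P = c \<cdot>\<^sub>m 1\<^sub>m 1)"
proof
  assume "P \<in> pauli_group 0" thus "\<exists>c\<in>ph. P = c \<cdot>\<^sub>m 1\<^sub>m 1" by (elim pg_E, auto)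
next
  assume "\<exists>c\<in>ph. P = c \<cdot>\<^sub>m 1\<^sub>m 1"
  then obtain c where c: "c \<in> ph" "P = c \<cdot>\<^sub>m tensor_list []" by auto
  have "c \<cdot>\<^sub>m tensor_list [] \<in> pauli_group 0" using c by (intro pg_I) auto
  thus "P \<in> pauli_group 0" using c by simp
qed

definition dgs :: "complex mat \<Rightarrow> complex \<Rightarrow> complex mat" where "dgs R s = dg R (s \<cdot>\<^sub>m R)"
definition ods :: "complex mat \<Rightarrow> complex \<Rightarrow> complex mat" where "ods R s = od R (s \<cdot>\<^sub>m R)"

lemma pg_Suc_I: assumes "R \<in> pauli_group n" "s \<in> sg"
  shows "dgs R s \<in> pauli_group (Suc n)" "ods R s \<in> pauli_group (Suc n)"
proof -
  from assms(1) obtain c ps where c: "c \<in> ph" "length ps = n" "set ps \<subseteq> single_paulis" "R = c \<cdot>\<^sub>m tensor_list ps"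
    by (rule pg_E)
  let ?T = "tensor_list ps"
  have T: "?T \<in> carrier_mat (2^n) (2^n)" using tensor_list_carrier c by auto
  have s: "s = 1 \<or> s = -1" using assms(2) unfolding sg_def by auto
  have ic: "\<i> * c * \<i> = - c"
  proof - 
    have "\<i> * c * \<i> = c * (\<i> * \<i>)" by (simp only: mult_ac)
    thus ?thesis by simp
  qed
  have I: "c \<cdot>\<^sub>m tensor_list (pauli_I # ps) \<in> pauli_group (Suc n)" 
    using c by (intro pg_I, auto simp: single_paulis_def)
  have X: "c \<cdot>\<^sub>m tensor_list (pauli_X # ps) \<in> pauli_group (Suc n)" 
    using c by (intro pg_I, auto simp: single_paulis_def)
  have Y: "(\<i> * c) \<cdot>\<^sub>m tensor_list (pauli_Y # ps) \<in> pauli_group (Suc n)" 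
    using c by (intro pg_I, auto simp: single_paulis_def ph_mult ph_def)
  have Z: "c \<cdot>\<^sub>m tensor_list (pauli_Z # ps) \<in> pauli_group (Suc n)" 
    using c by (intro pg_I, auto simp: single_paulis_def)
  show "dgs R s \<in> pauli_group (Suc n)"
    using s I Z T c(4) by (auto simp: dgs_def kron_I[where N="2^n"] kron_Z[where N="2^n"] dg_smult[where N="2^n"])
  show "ods R s \<in> pauli_group (Suc n)"
    using s X Y T c(4) ic by (auto simp: ods_def kron_X[where N="2^n"] kron_Y[where N="2^n"] od_smult[where N="2^n"])
qed

lemma pg_Suc_E: assumes "M \<in> pauli_group (Suc n)"
  obtains R s where "R \<in> pauli_group n" "s \<in> sg" "M = dgs R s \<or> M = ods R s"
proof -
  from assms obtain c ps where c: "c \<in> ph" "length ps = Suc n" "set ps \<subseteq> single_paulis" "M = c \<cdot>\<^sub>m tensor_list ps"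
    by (rule pg_E)
  then obtain A qs where ps: "ps = A # qs" by (cases ps, auto)
  let ?T = "tensor_list qs"
  have T: "?T \<in> carrier_mat (2^n) (2^n)" using tensor_list_carrier c ps by auto
  have R: "c \<cdot>\<^sub>m ?T \<in> pauli_group n" using c ps by (intro pg_I, auto)
  have R': "(-\<i> * c) \<cdot>\<^sub>m ?T \<in> pauli_group n" using c ps by (intro pg_I, auto simp: ph_def)
  have A: "A = pauli_I \<or> A = pauli_X \<or> A = pauli_Y \<or> A = pauli_Z" using c ps by (auto simp: single_paulis_def)
  have sg: "1 \<in> sg" "-1 \<in> sg" by (auto simp: sg_def)
  show ?thesis
  proof (rule disjE[OF A]; (elim disjE)?)
    assume "A = pauli_I" thus ?thesis using that[OF R sg(1)] c ps T
      by (auto simp: dgs_def kron_I[where N="2^n"] dg_smult[where N="2^n"])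
  next
    assume "A = pauli_Z" thus ?thesis using that[OF R sg(2)] c ps T
      by (auto simp: dgs_def kron_Z[where N="2^n"] dg_smult[where N="2^n"])
  next
    assume "A = pauli_X" thus ?thesis using that[OF R sg(1)] c ps T
      by (auto simp: ods_def kron_X[where N="2^n"] od_smult[where N="2^n"])
  next
    assume "A = pauli_Y" thus ?thesis using that[OF R' sg(2)] c ps T
      by (auto simp: ods_def kron_Y[where N="2^n"] od_smult[where N="2^n"] mult.commute)
  qed
qed

context fixes N :: nat begin

lemma dgs_carrier[simp]: "R \<in> carrier_mat N N \<Longrightarrow> dgs R s \<in> carrier_mat (N+N) (N+N)"
  unfolding dgs_def by simp
lemma ods_carrier[simp]: "R \<in> carrier_mat N N \<Longrightarrow> ods R s \<in> carrier_mat (N+N) (N+N)"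
  unfolding ods_def by simp

lemma mult_smult_r: fixes R S :: "complex mat" assumes "R \<in> carrier_mat N N" "S \<in> carrier_mat N N" shows "R * (b \<cdot>\<^sub>m S) = b \<cdot>\<^sub>m (R * S)"
  by (rule mult_smult_distrib[OF assms])
lemma mult_smult_l: fixes R S :: "complex mat" assumes "R \<in> carrier_mat N N" "S \<in> carrier_mat N N" shows "(a \<cdot>\<^sub>m R) * S = a \<cdot>\<^sub>m (R * S)"
  by (rule mult_smult_assoc_mat[OF assms])
lemma smult_mult_smult: fixes R S :: "complex mat" assumes "R \<in> carrier_mat N N" "S \<in> carrier_mat N N" shows "(a \<cdot>\<^sub>m R) * (b \<cdot>\<^sub>m S) = (a * b) \<cdot>\<^sub>m (R * S)"
proof -
  have "(a \<cdot>\<^sub>m R) * (b \<cdot>\<^sub>m S) = a \<cdot>\<^sub>m (R * (b \<cdot>\<^sub>m S))" using assms by (intro mult_smult_l) auto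
  also have "\<dots> = (a * b) \<cdot>\<^sub>m (R * S)" using mult_smult_r[OF assms] by simp
  finally show ?thesis .
qed

lemma dgs_mult_dgs: "R \<in> carrier_mat N N \<Longrightarrow> S \<in> carrier_mat N N \<Longrightarrow> dgs R s * dgs S t = dgs (R * S) (s * t)"
  unfolding dgs_def by (simp add: dg_mult_dg[where N=N] smult_mult_smult)
lemma dgs_mult_ods: "R \<in> carrier_mat N N \<Longrightarrow> S \<in> carrier_mat N N \<Longrightarrow> dgs R s * ods S t = ods (R * S) (s * t)"
  unfolding dgs_def ods_def by (simp add: dg_mult_od[where N=N] smult_mult_smult)
lemma ods_mult_dgs: "R \<in> carrier_mat N N \<Longrightarrow> S \<in> carrier_mat N N \<Longrightarrow> t \<in> sg \<Longrightarrow> ods R s * dgs S t = ods (t \<cdot>\<^sub>m (R * S)) (s * t)"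
  unfolding dgs_def ods_def by (simp add: od_mult_dg[where N=N] mult_smult_r mult_smult_l sg_sq mult.assoc)
lemma ods_mult_ods: "R \<in> carrier_mat N N \<Longrightarrow> S \<in> carrier_mat N N \<Longrightarrow> t \<in> sg \<Longrightarrow> ods R s * ods S t = dgs (t \<cdot>\<^sub>m (R * S)) (s * t)"
  unfolding dgs_def ods_def by (simp add: od_mult_od[where N=N] mult_smult_r mult_smult_l sg_sq mult.assoc)

lemma dgs_smult: "R \<in> carrier_mat N N \<Longrightarrow> c \<cdot>\<^sub>m dgs R s = dgs (c \<cdot>\<^sub>m R) s"
  unfolding dgs_def by (simp add: dg_smult[where N=N] mult.commute)
lemma ods_smult: "R \<in> carrier_mat N N \<Longrightarrow> c \<cdot>\<^sub>m ods R s = ods (c \<cdot>\<^sub>m R) s"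
  unfolding ods_def by (simp add: od_smult[where N=N] mult.commute)

lemma adj_dgs: "R \<in> carrier_mat N N \<Longrightarrow> s \<in> sg \<Longrightarrow> mat_adjoint (dgs R s) = dgs (mat_adjoint R) s"
  unfolding dgs_def by (simp add: adj_dg[where N=N] sg_cnj)
lemma adj_ods: "R \<in> carrier_mat N N \<Longrightarrow> s \<in> sg \<Longrightarrow> mat_adjoint (ods R s) = ods (s \<cdot>\<^sub>m mat_adjoint R) s"
  unfolding ods_def by (simp add: adj_od[where N=N] sg_cnj sg_sq)

lemma dgs_one: "dgs (1\<^sub>m N) 1 = 1\<^sub>m (N+N)"
  unfolding dgs_def using dg_one by simp

end

lemma two_pow_Suc: "(2::nat) ^ Suc n = 2^n + 2^n" by simp

lemma pg_mult: "P \<in> pauli_group n \<Longrightarrow> Q \<in> pauli_group n \<Longrightarrow> P * Q \<in> pauli_group n"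
proof (induction n arbitrary: P Q)
  case 0
  then obtain c d where cd: "c\<in>ph" "d\<in>ph" "P = c \<cdot>\<^sub>m 1\<^sub>m 1" "Q = d \<cdot>\<^sub>m 1\<^sub>m 1" by (auto simp: pg0)
  hence "P * Q = (c * d) \<cdot>\<^sub>m 1\<^sub>m 1" by (simp add: smult_mult_smult[where N=1])
  thus ?case using cd ph_mult by (auto simp: pg0)
next
  case (Suc n)
  from Suc.prems(1) obtain R s where R: "R \<in> pauli_group n" "s \<in> sg" "P = dgs R s \<or> P = ods R s" by (rule pg_Suc_E)
  from Suc.prems(2) obtain S t where S: "S \<in> pauli_group n" "t \<in> sg" "Q = dgs S t \<or> Q = ods S t" by (rule pg_Suc_E)
  have RS: "R * S \<in> pauli_group n" "t \<cdot>\<^sub>m (R * S) \<in> pauli_group n" using Suc.IH R S pg_smult sg_ph by auto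
  have c: "R \<in> carrier_mat (2^n) (2^n)" "S \<in> carrier_mat (2^n) (2^n)" using R S pg_carrier by auto
  have st: "s * t \<in> sg" using R S sg_mult by auto
  from R(3) S(3) show ?case
    using pg_Suc_I[OF RS(1) st] pg_Suc_I[OF RS(2) st] c S(2)
    by (auto simp: dgs_mult_dgs[where N="2^n"] dgs_mult_ods[where N="2^n"] ods_mult_dgs[where N="2^n"] ods_mult_ods[where N="2^n"])
qed

lemma pg_adj: "P \<in> pauli_group n \<Longrightarrow> mat_adjoint P \<in> pauli_group n"
proof (induction n arbitrary: P)
  case 0
  then obtain c where c: "c\<in>ph" "P = c \<cdot>\<^sub>m 1\<^sub>m 1" by (auto simp: pg0)
  thus ?case using ph_cnj by (auto simp: pg0)
next
  case (Suc n)
  from Suc.prems(1) obtain R s where R: "R \<in> pauli_group n" "s \<in> sg" "P = dgs R s \<or> P = ods R s" by (rule pg_Suc_E)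
  have R': "mat_adjoint R \<in> pauli_group n" "s \<cdot>\<^sub>m mat_adjoint R \<in> pauli_group n" using Suc.IH R pg_smult sg_ph by auto
  have c: "R \<in> carrier_mat (2^n) (2^n)" using R pg_carrier by auto
  from R(3) show ?case
    using pg_Suc_I[OF R'(1) R(2)] pg_Suc_I[OF R'(2) R(2)] c R(2)
    by (auto simp: adj_dgs[where N="2^n"] adj_ods[where N="2^n"])
qed

lemma pg_unitary: "P \<in> pauli_group n \<Longrightarrow> P * mat_adjoint P = 1\<^sub>m (2^n)"
proof (induction n arbitrary: P)
  case 0
  then obtain c where c: "c\<in>ph" "P = c \<cdot>\<^sub>m 1\<^sub>m 1" by (auto simp: pg0)
  thus ?case using ph_cnj_mult[OF c(1)] by (simp add: smult_mult_smult[where N=1])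
next
  case (Suc n)
  from Suc.prems(1) obtain R s where R: "R \<in> pauli_group n" "s \<in> sg" "P = dgs R s \<or> P = ods R s" by (rule pg_Suc_E)
  have c: "R \<in> carrier_mat (2^n) (2^n)" using R pg_carrier by auto
  have u: "R * mat_adjoint R = 1\<^sub>m (2^n)" using Suc.IH R by auto
  from R(3) show ?case
    using c R(2) u sg_sq[OF R(2)] dgs_one[of "2^n"]
    by (auto simp: adj_dgs[where N="2^n"] adj_ods[where N="2^n"] dgs_mult_dgs[where N="2^n"] ods_mult_ods[where N="2^n"]
       mult_smult_r[where N="2^n"] sg_def)
qed

lemma pg_comm: "P \<in> pauli_group n \<Longrightarrow> Q \<in> pauli_group n \<Longrightarrow> \<exists>e\<in>sg. P * Q = e \<cdot>\<^sub>m (Q * P)"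
proof (induction n arbitrary: P Q)
  case 0
  then obtain c d where cd: "c\<in>ph" "d\<in>ph" "P = c \<cdot>\<^sub>m 1\<^sub>m 1" "Q = d \<cdot>\<^sub>m 1\<^sub>m 1" by (auto simp: pg0)
  hence "P * Q = 1 \<cdot>\<^sub>m (Q * P)" by (simp add: smult_mult_smult[where N=1] mult.commute)
  thus ?case by (auto simp: sg_def)
next
  case (Suc n)
  from Suc.prems(1) obtain R s where R: "R \<in> pauli_group n" "s \<in> sg" "P = dgs R s \<or> P = ods R s" by (rule pg_Suc_E)
  from Suc.prems(2) obtain S t where S: "S \<in> pauli_group n" "t \<in> sg" "Q = dgs S t \<or> Q = ods S t" by (rule pg_Suc_E)
  from Suc.IH[OF R(1) S(1)] obtain e where e: "e \<in> sg" "R * S = e \<cdot>\<^sub>m (S * R)" by auto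
  have c: "R \<in> carrier_mat (2^n) (2^n)" "S \<in> carrier_mat (2^n) (2^n)" using R S pg_carrier by auto
  have sgs: "s = 1 \<or> s = -1" "t = 1 \<or> t = -1" "e = 1 \<or> e = -1" using R S e by (auto simp: sg_def)
  from R(3) S(3) show ?case
  proof (elim disjE)
    assume "P = dgs R s" "Q = dgs S t"
    thus ?thesis using c e sgs
      by (intro bexI[of _ e]) (auto simp: dgs_mult_dgs[where N="2^n"] dgs_smult[where N="2^n"] mult.commute)
  next
    assume "P = dgs R s" "Q = ods S t"
    thus ?thesis using c e sgs R(2) S(2)
      by (intro bexI[of _ "e*s"]) (auto simp: dgs_mult_ods[where N="2^n"] ods_mult_dgs[where N="2^n"] ods_smult[where N="2^n"] mult.commute sg_def)
  next
    assume "P = ods R s" "Q = dgs S t"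
    thus ?thesis using c e sgs R(2) S(2)
      by (intro bexI[of _ "e*t"]) (auto simp: dgs_mult_ods[where N="2^n"] ods_mult_dgs[where N="2^n"] ods_smult[where N="2^n"] mult.commute sg_def)
  next
    assume "P = ods R s" "Q = ods S t"
    thus ?thesis using c e sgs R(2) S(2)
      by (intro bexI[of _ "e*t*s"]) (auto simp: ods_mult_ods[where N="2^n"] dgs_smult[where N="2^n"] mult.commute sg_def)
  qed
qed

lemma pg_sq: "P \<in> pauli_group n \<Longrightarrow> \<exists>e\<in>sg. P * P = e \<cdot>\<^sub>m 1\<^sub>m (2^n)"
proof (induction n arbitrary: P)
  case 0
  then obtain c where c: "c\<in>ph" "P = c \<cdot>\<^sub>m 1\<^sub>m 1" by (auto simp: pg0)
  hence "P * P = (c*c) \<cdot>\<^sub>m 1\<^sub>m 1" by (simp add: smult_mult_smult[where N=1])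
  thus ?case using ph_sq[OF c(1)] by auto
next
  case (Suc n)
  from Suc.prems(1) obtain R s where R: "R \<in> pauli_group n" "s \<in> sg" "P = dgs R s \<or> P = ods R s" by (rule pg_Suc_E)
  from Suc.IH[OF R(1)] obtain e where e: "e \<in> sg" "R * R = e \<cdot>\<^sub>m 1\<^sub>m (2^n)" by auto
  have c: "R \<in> carrier_mat (2^n) (2^n)" using R pg_carrier by auto
  have o: "1\<^sub>m (2 ^ Suc n) = dgs (1\<^sub>m (2^n)) 1" using dgs_one[of "2^n"] by (simp add: mult_2)
  have sgs: "s = 1 \<or> s = -1" "e = 1 \<or> e = -1" using R e by (auto simp: sg_def)
  from R(3) show ?case
  proof (elim disjE)
    assume "P = dgs R s"
    thus ?thesis using c e sgs R(2) o
      by (intro bexI[of _ e]) (auto simp: dgs_mult_dgs[where N="2^n"] dgs_smult[where N="2^n"] sg_def)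
  next
    assume "P = ods R s"
    thus ?thesis using c e sgs R(2) o
      by (intro bexI[of _ "e*s"]) (auto simp: ods_mult_ods[where N="2^n"] dgs_smult[where N="2^n"] mult_smult_r[where N="2^n"] sg_def)
  qed
qed

lemma mult_carrier_sq: "A \<in> carrier_mat N N \<Longrightarrow> B \<in> carrier_mat N N \<Longrightarrow> A * B \<in> carrier_mat N N"
  by simp
lemma assocN: "A \<in> carrier_mat N N \<Longrightarrow> B \<in> carrier_mat N N \<Longrightarrow> C \<in> carrier_mat N N \<Longrightarrow> A * B * C = A * (B * C)"
  by simp
lemma adj_multN: fixes A :: "complex mat" shows "A \<in> carrier_mat N N \<Longrightarrow> B \<in> carrier_mat N N \<Longrightarrow> mat_adjoint (A * B) = mat_adjoint B * mat_adjoint A"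
  by (rule adj_mult)
lemma adj_carrier_sq: fixes A :: "complex mat" shows "A \<in> carrier_mat N N \<Longrightarrow> mat_adjoint A \<in> carrier_mat N N"
  by simp
lemma smult_carrier_sq: "A \<in> carrier_mat N N \<Longrightarrow> c \<cdot>\<^sub>m A \<in> carrier_mat N N"
  by simp

lemma cl_iff: "V \<in> clifford_hier m 2 \<longleftrightarrow> unitary_n m V \<and> (\<forall>P\<in>pauli_group m. V * P * mat_adjoint V \<in> pauli_group m)"
  by (simp add: numeral_2_eq_2)
lemma c3_iff: "V \<in> clifford_hier m 3 \<longleftrightarrow> unitary_n m V \<and> (\<forall>P\<in>pauli_group m. V * P * mat_adjoint V \<in> clifford_hier m 2)"
  by (simp add: numeral_3_eq_3 numeral_2_eq_2)

lemma unitary_left: assumes "unitary_n m U" shows "mat_adjoint U * U = 1\<^sub>m (2^m)"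
  using assms unfolding unitary_n_def by (intro mat_mult_left_right_inverse[of U "2^m"]) auto

lemma pg_unitary_n: "P \<in> pauli_group n \<Longrightarrow> unitary_n n P"
  unfolding unitary_n_def using pg_carrier pg_unitary by auto

lemma pg_adj_left: "P \<in> pauli_group n \<Longrightarrow> mat_adjoint P * P = 1\<^sub>m (2^n)"
  using pg_unitary[OF pg_adj, of P n] by simp

lemma pg_one: "1\<^sub>m (2^n) \<in> pauli_group n"
proof -
  have "1 \<cdot>\<^sub>m tensor_list (replicate n pauli_I) \<in> pauli_group n"
    by (rule pg_I) (auto simp: ph_def single_paulis_def)
  hence P: "tensor_list (replicate n pauli_I) \<in> pauli_group n" by simp
  show ?thesis using pg_mult[OF P pg_adj[OF P]] pg_unitary[OF P] by simp
qed

lemma pg_adj_eq: assumes "P \<in> pauli_group n" shows "\<exists>d\<in>sg. mat_adjoint P = d \<cdot>\<^sub>m P"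
proof -
  obtain d where d: "d \<in> sg" "P * P = d \<cdot>\<^sub>m 1\<^sub>m (2^n)" using pg_sq[OF assms] by auto
  have c: "P \<in> carrier_mat (2^n) (2^n)" using pg_carrier[OF assms] .
  have "d \<cdot>\<^sub>m P = d \<cdot>\<^sub>m (P * (P * mat_adjoint P))" using pg_unitary[OF assms] c by simp
  also have "\<dots> = d \<cdot>\<^sub>m ((P * P) * mat_adjoint P)" using c by (simp add: assocN[where N="2^n"])
  also have "\<dots> = (d * d) \<cdot>\<^sub>m mat_adjoint P" using c d(2) by (simp add: mult_smult_l[where N="2^n"])
  also have "\<dots> = mat_adjoint P" using sg_sq[OF d(1)] by simp
  finally show ?thesis using d(1) by (intro bexI[of _ d]) simp_all
qed

lemma unitary_mult: assumes "unitary_n m A" "unitary_n m B" shows "unitary_n m (A * B)"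
proof -
  have c: "A \<in> carrier_mat (2^m) (2^m)" "B \<in> carrier_mat (2^m) (2^m)" using assms unfolding unitary_n_def by auto
  have "A * B * mat_adjoint (A * B) = A * (B * mat_adjoint B) * mat_adjoint A"
    using c by (simp add: adj_multN[where N="2^m"] assocN[where N="2^m"] mult_carrier_sq adj_carrier_sq)
  also have "\<dots> = 1\<^sub>m (2^m)" using assms c unfolding unitary_n_def by simp
  finally show ?thesis using c unfolding unitary_n_def by auto
qed

lemma cl_mult: assumes "V \<in> clifford_hier m 2" "W \<in> clifford_hier m 2" shows "V * W \<in> clifford_hier m 2"
proof -
  have c: "V \<in> carrier_mat (2^m) (2^m)" "W \<in> carrier_mat (2^m) (2^m)" using assms unfolding cl_iff unitary_n_def by auto
  { fix P assume P: "P \<in> pauli_group m"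
    have cP: "P \<in> carrier_mat (2^m) (2^m)" using pg_carrier[OF P] .
    have "V * W * P * mat_adjoint (V * W) = V * (W * P * mat_adjoint W) * mat_adjoint V"
      using c cP by (simp add: adj_multN[where N="2^m"] assocN[where N="2^m"] mult_carrier_sq adj_carrier_sq)
    hence "V * W * P * mat_adjoint (V * W) \<in> pauli_group m" using assms P unfolding cl_iff by simp
  }
  thus ?thesis using assms unitary_mult unfolding cl_iff by auto
qed

lemma pg_cl: assumes "P \<in> pauli_group m" shows "P \<in> clifford_hier m 2"
  unfolding cl_iff using pg_unitary_n[OF assms] pg_mult pg_adj assms by auto

lemma unitary_Suc_iff: "unitary_n (Suc n) M \<longleftrightarrow> M \<in> carrier_mat (2^n + 2^n) (2^n + 2^n) \<and> M * mat_adjoint M = 1\<^sub>m (2^n + 2^n)"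
  unfolding unitary_n_def two_pow_Suc ..

lemma cl_dgs: assumes V: "V \<in> clifford_hier n 2" shows "dgs V 1 \<in> clifford_hier (Suc n) 2"
proof -
  let ?N = "2^n::nat"
  have cV: "V \<in> carrier_mat ?N ?N" and uV: "V * mat_adjoint V = 1\<^sub>m ?N" using V unfolding cl_iff unitary_n_def by auto
  have cVa: "mat_adjoint V \<in> carrier_mat ?N ?N" using cV by simp
  have s1: "(1::complex) \<in> sg" by (simp add: sg_def)
  have adjV: "mat_adjoint (dgs V 1) = dgs (mat_adjoint V) 1" using adj_dgs[OF cV s1] by simp
  have u: "unitary_n (Suc n) (dgs V 1)"
    unfolding unitary_Suc_iff adjV using cV cVa uV by (simp add: dgs_mult_dgs[where N="?N"] dgs_one)
  { fix Q assume Q: "Q \<in> pauli_group (Suc n)"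
    then obtain R s where R: "R \<in> pauli_group n" "s \<in> sg" "Q = dgs R s \<or> Q = ods R s" by (rule pg_Suc_E)
    have cR: "R \<in> carrier_mat ?N ?N" using pg_carrier[OF R(1)] .
    have VR: "V * R * mat_adjoint V \<in> pauli_group n" using V R unfolding cl_iff by auto
    from R(3) have "dgs V 1 * Q * mat_adjoint (dgs V 1) \<in> pauli_group (Suc n)"
    proof
      assume "Q = dgs R s"
      hence "dgs V 1 * Q * mat_adjoint (dgs V 1) = dgs (V * R * mat_adjoint V) s"
        unfolding adjV using cV cVa cR by (simp add: dgs_mult_dgs[where N="?N"])
      thus ?thesis using pg_Suc_I(1)[OF VR R(2)] by simp
    next
      assume "Q = ods R s"
      hence "dgs V 1 * Q * mat_adjoint (dgs V 1) = ods (V * R * mat_adjoint V) s"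
        unfolding adjV using cV cVa cR s1 by (simp add: dgs_mult_ods[where N="?N"] ods_mult_dgs[where N="?N"])
      thus ?thesis using pg_Suc_I(2)[OF VR R(2)] by simp
    qed
  }
  thus ?thesis using u unfolding cl_iff by auto
qed

lemma cl_ctrl: assumes T: "T \<in> pauli_group n" shows "dg (1\<^sub>m (2^n)) T \<in> clifford_hier (Suc n) 2"
proof -
  let ?N = "2^n::nat"
  have cT: "T \<in> carrier_mat ?N ?N" using pg_carrier[OF T] .
  have cTa: "mat_adjoint T \<in> carrier_mat ?N ?N" using cT by simp
  have c1: "1\<^sub>m ?N \<in> carrier_mat ?N ?N" by simp
  have uT: "T * mat_adjoint T = 1\<^sub>m ?N" using pg_unitary[OF T] .
  obtain d where d: "d \<in> sg" "mat_adjoint T = d \<cdot>\<^sub>m T" using pg_adj_eq[OF T] by auto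
  have adjC: "mat_adjoint (dg (1\<^sub>m ?N) T) = dg (1\<^sub>m ?N) (mat_adjoint T)" using adj_dg[OF c1 cT] by simp
  have u: "unitary_n (Suc n) (dg (1\<^sub>m ?N) T)"
    unfolding unitary_Suc_iff adjC using cT cTa uT by (simp add: dg_mult_dg[where N="?N"] dg_one)
  { fix Q assume Q: "Q \<in> pauli_group (Suc n)"
    then obtain R s where R: "R \<in> pauli_group n" "s \<in> sg" "Q = dgs R s \<or> Q = ods R s" by (rule pg_Suc_E)
    have cR: "R \<in> carrier_mat ?N ?N" using pg_carrier[OF R(1)] .
    obtain e where e: "e \<in> sg" "T * R = e \<cdot>\<^sub>m (R * T)" using pg_comm[OF T R(1)] by auto
    have dse: "s * e * d * d = s * e" using sg_sq[OF d(1)] by (metis mult.assoc mult_1_right)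
    have TRT: "T * R * mat_adjoint T = e \<cdot>\<^sub>m R"
    proof -
      have "T * R * mat_adjoint T = (e \<cdot>\<^sub>m (R * T)) * mat_adjoint T" using e by simp
      also have "\<dots> = e \<cdot>\<^sub>m (R * (T * mat_adjoint T))" using cR cT cTa
        by (simp add: mult_smult_l[where N="?N"] assocN[where N="?N"] mult_carrier_sq)
      finally show ?thesis using uT cR by simp
    qed
    from R(3) have "dg (1\<^sub>m ?N) T * Q * mat_adjoint (dg (1\<^sub>m ?N) T) \<in> pauli_group (Suc n)"
    proof
      assume "Q = dgs R s"
      hence "dg (1\<^sub>m ?N) T * Q * mat_adjoint (dg (1\<^sub>m ?N) T) = dg R (T * (s \<cdot>\<^sub>m R) * mat_adjoint T)"
        unfolding adjC dgs_def using cT cTa cR by (simp add: dg_mult_dg[where N="?N"])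
      also have "\<dots> = dgs R (s * e)" unfolding dgs_def using cT cTa cR TRT
        by (simp add: mult_smult_r[where N="?N"] mult_smult_l[where N="?N"] mult_carrier_sq mult.commute)
      finally show ?thesis using pg_Suc_I(1)[OF R(1) sg_mult[OF R(2) e(1)]] by simp
    next
      assume "Q = ods R s"
      hence "dg (1\<^sub>m ?N) T * Q * mat_adjoint (dg (1\<^sub>m ?N) T) = od (R * mat_adjoint T) (T * (s \<cdot>\<^sub>m R))"
        unfolding adjC ods_def using cT cTa cR by (simp add: dg_mult_od[where N="?N"] od_mult_dg[where N="?N"])
      also have "\<dots> = od (d \<cdot>\<^sub>m (R * T)) ((s * e) \<cdot>\<^sub>m (R * T))" using cT cTa cR e d
        by (simp add: mult_smult_r[where N="?N"] mult_smult_l[where N="?N"] mult_carrier_sq mult.commute)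
      also have "\<dots> = ods (d \<cdot>\<^sub>m (R * T)) (s * e * d)" unfolding ods_def smult_smult_mat dse by (rule refl)
      finally show ?thesis using pg_Suc_I(2)[OF pg_smult[OF pg_mult[OF R(1) T] sg_ph[OF d(1)]]] 
          sg_mult[OF sg_mult[OF R(2) e(1)] d(1)] by simp
    qed
  }
  thus ?thesis using u unfolding cl_iff by auto
qed

lemma od_pg_E: assumes "od A B \<in> pauli_group (Suc n)" "A \<in> carrier_mat (2^n) (2^n)" "B \<in> carrier_mat (2^n) (2^n)"
  shows "B \<in> pauli_group n"
proof -
  let ?N = "2^n::nat"
  obtain R s where R: "R \<in> pauli_group n" "s \<in> sg" "od A B = dgs R s \<or> od A B = ods R s" using assms(1) by (rule pg_Suc_E)
  have cR: "R \<in> carrier_mat ?N ?N" using pg_carrier[OF R(1)] .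
  from R(3) show ?thesis
  proof
    assume "od A B = dgs R s"
    hence "R = 0\<^sub>m ?N ?N" unfolding dgs_def using assms cR by (intro od_eq_dg[of A ?N B R "s \<cdot>\<^sub>m R"]) auto
    hence eq: "(0\<^sub>m ?N ?N :: complex mat) = 1\<^sub>m ?N" using pg_unitary[OF R(1)] by simp
    have "(0\<^sub>m ?N ?N :: complex mat) $$ (0,0) = 1\<^sub>m ?N $$ (0,0)" by (subst eq) (rule refl)
    thus ?thesis by simp
  next
    assume "od A B = ods R s"
    hence "B = s \<cdot>\<^sub>m R" unfolding ods_def using assms cR by (intro conjunct2[OF od_eq[of A ?N B R "s \<cdot>\<^sub>m R"]]) auto
    thus ?thesis using pg_smult[OF R(1) sg_ph[OF R(2)]] by simp
  qed
qed

lemma ket_entries: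
  "ket0bra0 $$ (0,0) = 1" "ket0bra0 $$ (0,Suc 0) = 0" "ket0bra0 $$ (Suc 0,0) = 0" "ket0bra0 $$ (Suc 0,Suc 0) = 0"
  "ket1bra1 $$ (0,0) = 0" "ket1bra1 $$ (0,Suc 0) = 0" "ket1bra1 $$ (Suc 0,0) = 0" "ket1bra1 $$ (Suc 0,Suc 0) = 1"
  "ket0bra0 \<in> carrier_mat 2 2" "ket1bra1 \<in> carrier_mat 2 2"
  unfolding ket0bra0_def ket1bra1_def by (simp_all add: mat_of_rows_list_def carrier_matI)

lemma controlled_dg: assumes "U \<in> carrier_mat (2^n) (2^n)" shows "controlled n U = dg (1\<^sub>m (2^n)) U"
proof -
  let ?N = "2^n::nat"
  have "kron ket0bra0 (1\<^sub>m ?N) = dg (1\<^sub>m ?N) (0\<^sub>m ?N ?N)"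
    using ket_entries by (simp add: kron_blocks[where N="?N"] dg_def)
  moreover have "kron ket1bra1 U = dg (0\<^sub>m ?N ?N) U"
    using ket_entries assms by (simp add: kron_blocks[where N="?N"] dg_def carrier_matD)
  ultimately show ?thesis unfolding controlled_def dg_def using assms
    by (simp add: add_four_block_mat[of _ ?N ?N _ ?N _ ?N] carrier_matD)
qed

theorem lemma1:
  fixes n :: nat and U :: "complex mat"
  assumes "unitary_n n U"
  shows "PSC n U \<longleftrightarrow>
           controlled n U \<in> clifford_hier (Suc n) 3 - clifford_hier (Suc n) 2"
proof -
  let ?N = "2^n::nat"
  have cU: "U \<in> carrier_mat ?N ?N" and uU: "U * mat_adjoint U = 1\<^sub>m ?N" using assms unfolding unitary_n_def by auto
  have cUa: "mat_adjoint U \<in> carrier_mat ?N ?N" using cU by simp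
  have uU': "mat_adjoint U * U = 1\<^sub>m ?N" using unitary_left[OF assms] .
  have c1: "1\<^sub>m ?N \<in> carrier_mat ?N ?N" by simp
  have s1: "(1::complex) \<in> sg" by (simp add: sg_def)
  define C where "C = dg (1\<^sub>m ?N) U"
  have CU: "controlled n U = C" unfolding C_def using controlled_dg[OF cU] .
  have adjC: "mat_adjoint C = dg (1\<^sub>m ?N) (mat_adjoint U)" unfolding C_def using adj_dg[OF c1 cU] by simp
  define X where "X = od (1\<^sub>m ?N) (1\<^sub>m ?N)"
  have X: "X \<in> pauli_group (Suc n)" using pg_Suc_I(2)[OF pg_one s1] unfolding X_def ods_def by simp
  have CXC: "C * X * mat_adjoint C = od (mat_adjoint U) U"
    unfolding adjC unfolding C_def X_def using cU cUa by (simp add: dg_mult_od[where N="?N"] od_mult_dg[where N="?N"])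
  have F1: "U \<in> pauli_group n" if "C \<in> clifford_hier (Suc n) 2"
    using that X CXC cU cUa od_pg_E[of "mat_adjoint U" U n] unfolding cl_iff by auto
  have uC: "unitary_n (Suc n) C"
    unfolding unitary_Suc_iff adjC using cU cUa uU unfolding C_def by (simp add: dg_mult_dg[where N="?N"] dg_one)
  show ?thesis unfolding CU
  proof
    assume psc: "PSC n U"
    hence Ucl: "U \<in> clifford_hier n 2" and Unp: "U \<notin> pauli_group n" and S: "U * U \<in> pauli_group n"
      unfolding PSC_def by auto
    have "C \<notin> clifford_hier (Suc n) 2" using F1 Unp by auto
    moreover have "C \<in> clifford_hier (Suc n) 3"
      unfolding c3_iff
    proof (intro conjI ballI uC)
      fix Q assume Q: "Q \<in> pauli_group (Suc n)"
      then obtain R s where R: "R \<in> pauli_group n" "s \<in> sg" "Q = dgs R s \<or> Q = ods R s" by (rule pg_Suc_E)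
      have cR: "R \<in> carrier_mat ?N ?N" using pg_carrier[OF R(1)] .
      have cRa: "mat_adjoint R \<in> carrier_mat ?N ?N" using cR by simp
      have uR: "mat_adjoint R * R = 1\<^sub>m ?N" using pg_adj_left[OF R(1)] .
      have uR': "R * mat_adjoint R = 1\<^sub>m ?N" using pg_unitary[OF R(1)] .
      have R': "U * R * mat_adjoint U \<in> pauli_group n" using Ucl R(1) unfolding cl_iff by auto
      have R'a: "U * mat_adjoint R * mat_adjoint U \<in> pauli_group n" using Ucl pg_adj[OF R(1)] unfolding cl_iff by auto
      from R(3) show "C * Q * mat_adjoint C \<in> clifford_hier (Suc n) 2"
      proof
        assume Qd: "Q = dgs R s"
        define Y where "Y = s \<cdot>\<^sub>m (U * R * mat_adjoint U * mat_adjoint R)"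
        have Y: "Y \<in> pauli_group n" unfolding Y_def using pg_smult[OF pg_mult[OF R' pg_adj[OF R(1)]] sg_ph[OF R(2)]] .
        have cY: "Y \<in> carrier_mat ?N ?N" using pg_carrier[OF Y] .
        have "C * Q * mat_adjoint C = dg R (U * (s \<cdot>\<^sub>m R) * mat_adjoint U)"
          unfolding Qd adjC unfolding C_def dgs_def using cU cUa cR by (simp add: dg_mult_dg[where N="?N"])
        also have "\<dots> = dg R (Y * R)" unfolding Y_def using cU cUa cR cRa uR
          by (simp add: mult_smult_r[where N="?N"] mult_smult_l[where N="?N"] assocN[where N="?N"] mult_carrier_sq)
        also have "\<dots> = dg (1\<^sub>m ?N) Y * dgs R 1" unfolding dgs_def using cY cR by (simp add: dg_mult_dg[where N="?N"])
        finally show ?thesis using cl_mult[OF cl_ctrl[OF Y] cl_dgs[OF pg_cl[OF R(1)]]] by simp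
      next
        assume Qo: "Q = ods R s"
        define A where "A = R * mat_adjoint U"
        define B where "B = U * R"
        have cA: "A \<in> carrier_mat ?N ?N" "B \<in> carrier_mat ?N ?N" unfolding A_def B_def using cU cUa cR by auto
        have adjA: "mat_adjoint A = U * mat_adjoint R" unfolding A_def using cR cUa by (simp add: adj_multN[where N="?N"])
        have cAa: "mat_adjoint A \<in> carrier_mat ?N ?N" using cA by simp
        have "A * mat_adjoint A = R * ((mat_adjoint U * U) * mat_adjoint R)" unfolding adjA unfolding A_def using cR cRa cU cUa
          by (simp add: assocN[where N="?N"] mult_carrier_sq)
        hence AA: "A * mat_adjoint A = 1\<^sub>m ?N" using uU' uR' left_mult_one_mat[OF cRa] by simp
        have AB0: "(U * mat_adjoint R * mat_adjoint U) * (U * U) * R = U * (mat_adjoint R * ((mat_adjoint U * U) * (U * R)))"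
          using cR cRa cU cUa by (simp add: assocN[where N="?N"] mult_carrier_sq)
        have AB: "mat_adjoint A * B = (U * mat_adjoint R * mat_adjoint U) * (U * U) * R" unfolding AB0 uU' adjA B_def
          using cR cRa cU cUa left_mult_one_mat[OF mult_carrier_sq[OF cU cR]] by (simp add: assocN[where N="?N"] mult_carrier_sq)
        define Y where "Y = s \<cdot>\<^sub>m (mat_adjoint A * B)"
        have Y: "Y \<in> pauli_group n" unfolding Y_def AB
          using pg_smult[OF pg_mult[OF pg_mult[OF R'a S] R(1)] sg_ph[OF R(2)]] .
        have cY: "Y \<in> carrier_mat ?N ?N" using pg_carrier[OF Y] .
        have "C * Q * mat_adjoint C = od (R * mat_adjoint U) (U * (s \<cdot>\<^sub>m R))"
          unfolding Qo adjC unfolding C_def ods_def using cU cUa cR by (simp add: dg_mult_od[where N="?N"] od_mult_dg[where N="?N"])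
        also have "\<dots> = od A (A * Y)"
        proof -
          have "A * (mat_adjoint A * B) = (A * mat_adjoint A) * B" using cA cAa by (simp add: assocN[where N="?N"])
          hence "A * Y = s \<cdot>\<^sub>m B" unfolding Y_def using cA cAa AA
            by (simp add: mult_smult_r[where N="?N"] mult_carrier_sq)
          moreover have "U * (s \<cdot>\<^sub>m R) = s \<cdot>\<^sub>m B" unfolding B_def using cU cR by (simp add: mult_smult_r[where N="?N"])
          ultimately show ?thesis unfolding A_def by simp
        qed
        also have "\<dots> = dgs A 1 * (dg (1\<^sub>m ?N) Y * X)" unfolding dgs_def X_def using cA cY
          by (simp add: dg_mult_od[where N="?N"])
        finally have eq: "C * Q * mat_adjoint C = dgs A 1 * (dg (1\<^sub>m ?N) Y * X)" .
        have "mat_adjoint (U * U) * U = mat_adjoint U"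
          using cU cUa uU' by (simp add: adj_multN[where N="?N"] assocN[where N="?N"])
        hence Ua: "mat_adjoint U \<in> clifford_hier n 2" using cl_mult[OF pg_cl[OF pg_adj[OF S]] Ucl] by simp
        have Acl: "A \<in> clifford_hier n 2" unfolding A_def using cl_mult[OF pg_cl[OF R(1)] Ua] .
        show ?thesis unfolding eq using cl_mult[OF cl_dgs[OF Acl] cl_mult[OF cl_ctrl[OF Y] pg_cl[OF X]]] .
      qed
    qed
    ultimately show "C \<in> clifford_hier (Suc n) 3 - clifford_hier (Suc n) 2" by simp
  next
    assume C3: "C \<in> clifford_hier (Suc n) 3 - clifford_hier (Suc n) 2"
    have Cn: "C \<notin> clifford_hier (Suc n) 2" using C3 by blast
    have "C \<in> clifford_hier (Suc n) 3" using C3 by blast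
    hence C3': "\<And>Q. Q \<in> pauli_group (Suc n) \<Longrightarrow> C * Q * mat_adjoint C \<in> clifford_hier (Suc n) 2"
      unfolding c3_iff by blast
    have Unp: "U \<notin> pauli_group n" using Cn cl_ctrl unfolding C_def by auto
    have Ucl: "U \<in> clifford_hier n 2" unfolding cl_iff
    proof (intro conjI ballI assms)
      fix P assume P: "P \<in> pauli_group n"
      have cP: "P \<in> carrier_mat ?N ?N" using pg_carrier[OF P] .
      have cPa: "mat_adjoint P \<in> carrier_mat ?N ?N" using cP by simp
      define W where "W = U * P * mat_adjoint U"
      have cW: "W \<in> carrier_mat ?N ?N" "mat_adjoint W \<in> carrier_mat ?N ?N" unfolding W_def using cU cUa cP by (simp_all add: mult_carrier_sq adj_carrier_sq)
      have "C * dgs P 1 * mat_adjoint C = dg P W"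
        unfolding adjC unfolding C_def dgs_def W_def using cU cUa cP by (simp add: dg_mult_dg[where N="?N"])
      hence D: "dg P W \<in> clifford_hier (Suc n) 2" using C3'[OF pg_Suc_I(1)[OF P s1]] by simp
      have adjD: "mat_adjoint (dg P W) = dg (mat_adjoint P) (mat_adjoint W)" using adj_dg[OF cP cW(1)] .
      have "dg P W * X * mat_adjoint (dg P W) = od (P * mat_adjoint W) (W * mat_adjoint P)"
        unfolding adjD X_def using cP cPa cW by (simp add: dg_mult_od[where N="?N"] od_mult_dg[where N="?N"])
      hence "od (P * mat_adjoint W) (W * mat_adjoint P) \<in> pauli_group (Suc n)" using D X unfolding cl_iff by auto
      hence WP: "W * mat_adjoint P \<in> pauli_group n" using mult_carrier_sq[OF cP cW(2)] mult_carrier_sq[OF cW(1) cPa] by (rule od_pg_E)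
      have "W * mat_adjoint P * P = W" using cW cP cPa pg_adj_left[OF P] by (simp add: assocN[where N="?N"])
      thus "U * P * mat_adjoint U \<in> pauli_group n" using pg_mult[OF WP P] unfolding W_def by simp
    qed
    have W0: "od (mat_adjoint U) U \<in> clifford_hier (Suc n) 2" using C3'[OF X] CXC by simp
    have adjW0: "mat_adjoint (od (mat_adjoint U) U) = od (mat_adjoint U) U" using adj_od[OF cUa cU] by simp
    have "od (mat_adjoint U) U * X * mat_adjoint (od (mat_adjoint U) U) = od (mat_adjoint U * mat_adjoint U) (U * U)"
      unfolding adjW0 X_def using cU cUa by (simp add: od_mult_od[where N="?N"] dg_mult_od[where N="?N"])
    hence "od (mat_adjoint U * mat_adjoint U) (U * U) \<in> pauli_group (Suc n)" using W0 X unfolding cl_iff by auto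
    hence S: "U * U \<in> pauli_group n" using mult_carrier_sq[OF cUa cUa] mult_carrier_sq[OF cU cU] by (rule od_pg_E)
    show "PSC n U" unfolding PSC_def using Ucl Unp S by auto
  qed
qed


end
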